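(* Suppose Assumptions (A3) and (A4) hold and $\delta\in\big(0,a(\alpha)^{1/(1+\alpha)}\big)$, where $a(\alpha)=\frac{4^{-\alpha}-e^{-(1+\alpha)\omega}}{2\sigma_1(\alpha)}$. Then $$\sup_{N\ge1}\sup_{n\ge1}E|X_n^{1,N}|^{1+\alpha}<\infty .$$
   Context: Setting. Fix integers $d,m\ge1$, a real $d\times d$ matrix $A$ with operator norm $\|A\|$, $\delta>0$, a Borel probability measure $\theta$ on $\mathbb{R}^m$, and a measurable $f:\mathbb{R}^d\times\mathcal{P}_1(\mathbb{R}^d)\times\mathbb{R}^m\to\mathbb{R}^d$. $\mathcal{P}_1(\mathbb{R}^d)$: Borel probability measures on $\mathbb{R}^d$ with finite first moment, with the Wasserstein-1 distance $\mathcal{W}_1(\mu,\nu)=\inf E|X-Y|$ over couplings. Particle system: for each $N\ge1$, $\{X_0^{i,N}\}_{i=1}^N$ are exchangeable, each with law $\mu_0\in\mathcal{P}_1(\mathbb{R}^d)$; $\{\epsilon_n^i\}_{i,n\ge1}$ i.i.d. with law $\theta$, independent of the initial conditions; $X_{n+1}^{i,N}=AX_n^{i,N}+\delta f(X_n^{i,N},\mu_n^N,\epsilon_{n+1}^i)$, $\mu_n^N=\frac1N\sum_{i=1}^N\delta_{X_n^{i,N}}$. $D(z):=\sup\frac{|f(x_1,\mu_1,z)-f(x_2,\mu_2,z)|}{|x_1-x_2|+\mathcal{W}_1(\mu_1,\mu_2)}$ (supremum over $(x_1,\mu_1)\neq(x_2,\mu_2)$), $D_1(z):=|f(0,\delta_0,z)|$.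 (A3): $\|A\|\le e^{-\omega}$ for some $\omega>0$. (A4): for some $\alpha>0$, $\int|x|^{1+\alpha}\mu_0(dx)<\infty$, $\sigma_1(\alpha):=\int D^{1+\alpha}d\theta<\infty$, $\int D_1^{1+\alpha}d\theta<\infty$. *)

theory Defs
  imports "HOL-Probability.Probability"
begin

definition P1 :: "'a::euclidean_space measure set" where
  "P1 = {\<mu>. prob_space \<mu> \<and> sets \<mu> = sets borel \<and> (\<integral>\<^sup>+x. ennreal (norm x) \<partial>\<mu>) < \<infinity>}"

definition coupling :: "'a::euclidean_space measure \<Rightarrow> 'a measure \<Rightarrow> ('a \<times> 'a) measure \<Rightarrow> bool" where
  "coupling \<mu> \<nu> \<pi> \<longleftrightarrow> prob_space \<pi> \<and> sets \<pi> = sets (borel \<Otimes>\<^sub>M borel)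
     \<and> distr \<pi> borel fst = \<mu> \<and> distr \<pi> borel snd = \<nu>"

definition W1 :: "'a::euclidean_space measure \<Rightarrow> 'a measure \<Rightarrow> ennreal" where
  "W1 \<mu> \<nu> = (INF \<pi> \<in> {\<pi>. coupling \<mu> \<nu> \<pi>}. \<integral>\<^sup>+p. ennreal (dist (fst p) (snd p)) \<partial>\<pi>)"

definition emp :: "nat \<Rightarrow> (nat \<Rightarrow> 'a::euclidean_space) \<Rightarrow> 'a measure" where
  "emp N x = measure_of (space borel) (sets borel)
      (\<lambda>B. ennreal (real (card {i\<in>{1..N}. x i \<in> B}) / real N))"

definition ennpow :: "ennreal \<Rightarrow> real \<Rightarrow> ennreal" where
  "ennpow x p = (if x = \<top> then \<top> else ennreal (enn2real x powr p))"

definition Dlip :: "('a::euclidean_space \<Rightarrow> 'a measure \<Rightarrow> 'b \<Rightarrow> 'a) \<Rightarrow> 'b \<Rightarrow> ennreal" where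
  "Dlip f z = (SUP q \<in> {((x1,\<mu>1),(x2,\<mu>2)). \<mu>1 \<in> P1 \<and> \<mu>2 \<in> P1 \<and> (x1,\<mu>1) \<noteq> (x2,\<mu>2)}.
      (case q of ((x1,\<mu>1),(x2,\<mu>2)) \<Rightarrow>
         ennreal (norm (f x1 \<mu>1 z - f x2 \<mu>2 z)) / (ennreal (dist x1 x2) + W1 \<mu>1 \<mu>2)))"

definition D1 :: "('a::euclidean_space \<Rightarrow> 'a measure \<Rightarrow> 'b \<Rightarrow> 'a) \<Rightarrow> 'b \<Rightarrow> real" where
  "D1 f z = norm (f 0 (return borel 0) z)"

text \<open>The interacting particle system: particle N n i \<omega> = X_n^{i,N}(\<omega>).\<close>
fun particle :: "real^'d::finite^'d \<Rightarrow> real \<Rightarrow> (real^'d \<Rightarrow> (real^'d) measure \<Rightarrow> 'b \<Rightarrow> real^'d)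
    \<Rightarrow> (nat \<Rightarrow> nat \<Rightarrow> 'w \<Rightarrow> real^'d) \<Rightarrow> (nat \<Rightarrow> nat \<Rightarrow> 'w \<Rightarrow> 'b)
    \<Rightarrow> nat \<Rightarrow> nat \<Rightarrow> nat \<Rightarrow> 'w \<Rightarrow> real^'d" where
  "particle A \<delta> f X0 eps N 0 i \<omega> = X0 N i \<omega>"
| "particle A \<delta> f X0 eps N (Suc n) i \<omega> =
     A *v particle A \<delta> f X0 eps N n i \<omega>
     + \<delta> *\<^sub>R f (particle A \<delta> f X0 eps N n i \<omega>)
                 (emp N (\<lambda>j. particle A \<delta> f X0 eps N n j \<omega>)) (eps i (Suc n) \<omega>)"

end

theory Submission
  imports Defs
begin

lemma powr_convex0:
  assumes p: "p \<ge> 1" shows "convex_on {0..} (\<lambda>x::real. x powr p)"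
proof (rule convex_onI)
  fix t x y :: real assume t: "t > 0" "t < 1" and xy: "x \<in> {0..}" "y \<in> {0..}"
  show "((1 - t) *\<^sub>R x + t *\<^sub>R y) powr p \<le> (1 - t) * x powr p + t * y powr p"
  proof (cases "x > 0 \<and> y > 0")
    case True
    have "convex_on {0<..} (\<lambda>x::real. x powr p)" by (rule powr_convex[OF p])
    then show ?thesis using True t unfolding convex_on_def
      by (metis greaterThan_iff less_eq_real_def  add.commute diff_add_cancel diff_ge_0_iff_ge)
  next
    case False
    have tp: "s powr p \<le> s" if "0 \<le> s" "s \<le> 1" for s :: real
    proof (cases "s = 0")
      case False
      then have "s powr p \<le> s powr 1"
        using that p by (intro powr_mono') auto
      then show ?thesis using that by simp
    qed (use p in simp)
    show ?thesis
    proof (cases "x = 0")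
      case True
      have "(t * y) powr p = t powr p * y powr p" using t xy by (simp add: powr_mult)
      also have "\<dots> \<le> t * y powr p" using tp[of t] t by (intro mult_right_mono) auto
      finally show ?thesis using True by simp
    next
      case False
      then have y: "y = 0" using xy \<open>\<not> (x > 0 \<and> y > 0)\<close> by auto
      have "((1-t) * x) powr p = (1-t) powr p * x powr p" using t xy by (simp add: powr_mult)
      also have "\<dots> \<le> (1-t) * x powr p" using tp[of "1-t"] t by (intro mult_right_mono) auto
      finally show ?thesis using y by simp
    qed
  qed
qed (simp add: convex_real_interval)

lemma jensen_powr:
  fixes w t :: "'i \<Rightarrow> real"
  assumes "p \<ge> 1" "finite S" "S \<noteq> {}" "\<And>i. i \<in> S \<Longrightarrow> w i \<ge> 0" "sum w S = 1"
    "\<And>i. i \<in> S \<Longrightarrow> t i \<ge> 0"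
  shows "(\<Sum>i\<in>S. w i * t i) powr p \<le> (\<Sum>i\<in>S. w i * t i powr p)"
  using convex_on_sum[OF assms(2,3) powr_convex0[OF assms(1)], of w t] assms by auto

lemma three_powr:
  fixes a b c l1 l2 l3 p :: real
  assumes p: "p \<ge> 1" and abc: "a \<ge> 0" "b \<ge> 0" "c \<ge> 0" and l: "l1 > 0" "l2 > 0" "l3 > 0" "l1 + l2 + l3 = 1"
  shows "(a + b + c) powr p \<le> l1 powr (1 - p) * a powr p + l2 powr (1 - p) * b powr p + l3 powr (1 - p) * c powr p"
proof -
  define w where "w i = (if i = (1::nat) then l1 else if i = 2 then l2 else l3)" for i
  define t where "t i = (if i = (1::nat) then a / l1 else if i = 2 then b / l2 else c / l3)" for i
  have "(\<Sum>i\<in>{1,2,3}. w i * t i) powr p \<le> (\<Sum>i\<in>{1,2,3}. w i * t i powr p)"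
    by (rule jensen_powr) (use p abc l in \<open>auto simp: w_def t_def\<close>)
  moreover have "(\<Sum>i\<in>{1,2,3}. w i * t i) = a + b + c" using l by (simp add: w_def t_def)
  moreover have "l * (x / l) powr p = l powr (1 - p) * x powr p" if "l > 0" "x \<ge> 0" for l x
    using that by (simp add: powr_divide powr_diff field_simps)
  ultimately show ?thesis using l abc by (simp add: w_def t_def add.assoc)
qed

lemma two_powr:
  fixes a b p :: real
  assumes p: "p \<ge> 1" and ab: "a \<ge> 0" "b \<ge> 0"
  shows "(a + b) powr p \<le> 2 powr (p - 1) * (a powr p + b powr p)"
proof -
  have H: "\<forall>x\<in>{0..}. \<forall>y\<in>{0..}. \<forall>u\<ge>0. \<forall>v\<ge>0. u + v = 1 \<longrightarrow> (u *\<^sub>R x + v *\<^sub>R y) powr p \<le> u * x powr p + v * y powr p"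
    using powr_convex0[OF p] unfolding convex_on_def by blast
  have "(a+b) powr p \<le> (1/2) * (2*a) powr p + (1/2) * (2*b) powr p"
    using H[rule_format, of "2*a" "2*b" "1/2" "1/2"] ab by simp
  moreover have "(2*a) powr p = 2 powr p * a powr p" "(2*b) powr p = 2 powr p * b powr p"
    using ab by (simp_all add: powr_mult)
  moreover have e: "2 powr p = 2 * 2 powr (p - 1)" by (simp add: powr_diff)
  ultimately have "2 * (a + b) powr p \<le> 2 * (2 powr (p - 1) * (a powr p + b powr p))"
    by (simp add: algebra_simps)
  then show ?thesis by simp
qed

lemma ucm_meas: "x \<in> measurable (uniform_count_measure A) (borel :: 'a::topological_space measure)"
  by (simp add: measurable_def space_uniform_count_measure sets_uniform_count_measure)

lemma emp_distr:
  fixes x :: "nat \<Rightarrow> 'a::euclidean_space"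
  assumes N: "N \<ge> 1"
  shows "emp N x = distr (uniform_count_measure {1..N}) borel x"
proof -
  let ?U = "uniform_count_measure {1..N}"
  have "distr ?U borel x = measure_of (space borel) (sets borel) (emeasure (distr ?U borel x))"
    by (metis measure_of_of_measure space_distr sets_distr)
  also have "\<dots> = emp N x" unfolding emp_def
  proof (rule measure_of_eq)
    show "sets borel \<subseteq> Pow (space (borel::'a measure))" by (rule sets.space_closed)
    fix a assume "a \<in> sigma_sets (space (borel::'a measure)) (sets borel)"
    then have a: "a \<in> sets borel" using sets.sigma_sets_eq[of "borel::'a measure"] by simp
    have "emeasure (distr ?U borel x) a = emeasure ?U (x -` a \<inter> {1..N})"
      using a by (simp add: emeasure_distr ucm_meas space_uniform_count_measure)
    also have "\<dots> = ennreal (real (card (x -` a \<inter> {1..N})) / real N)"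
      using N by (subst emeasure_uniform_count_measure) (auto simp: ennreal_of_nat_eq_real_of_nat divide_ennreal)
    also have "x -` a \<inter> {1..N} = {i\<in>{1..N}. x i \<in> a}" by auto
    finally show "emeasure (distr ?U borel x) a = ennreal (real (card {i\<in>{1..N}. x i \<in> a}) / real N)" .
  qed
  finally show ?thesis ..
qed

lemma emp_cong:
  assumes "\<And>i. i \<in> {1..N} \<Longrightarrow> x i = y i"
  shows "emp N x = emp N y"
proof -
  have "\<And>B. {i\<in>{1..N}. x i \<in> B} = {i\<in>{1..N}. y i \<in> B}" using assms by auto
  then show ?thesis unfolding emp_def by simp
qed

lemma nn_integral_emp:
  fixes x :: "nat \<Rightarrow> 'a::euclidean_space"
  assumes N: "N \<ge> 1" and g: "g \<in> borel_measurable borel"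
  shows "(\<integral>\<^sup>+y. g y \<partial>emp N x) = (\<Sum>i\<in>{1..N}. g (x i)) / of_nat N"
proof -
  have "(\<integral>\<^sup>+y. g y \<partial>emp N x) = (\<integral>\<^sup>+i. g (x i) \<partial>uniform_count_measure {1..N})"
    using N g by (simp add: emp_distr nn_integral_distr ucm_meas)
  also have "\<dots> = (\<Sum>i\<in>{1..N}. ennreal (1 / real N) * g (x i))"
    unfolding uniform_count_measure_def by (simp add: nn_integral_point_measure_finite)
  also have "\<dots> = (\<Sum>i\<in>{1..N}. g (x i)) * ennreal (1 / real N)"
    by (simp add: sum_distrib_right mult.commute[of "ennreal (1 / real N)"])
  also have "\<dots> = (\<Sum>i\<in>{1..N}. g (x i)) / of_nat N"
    using N by (simp add: divide_ennreal_def ennreal_of_nat_eq_real_of_nat inverse_ennreal inverse_eq_divide)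
  finally show ?thesis .
qed

lemma emp_P1:
  fixes x :: "nat \<Rightarrow> 'a::euclidean_space"
  assumes N: "N \<ge> 1" shows "emp N x \<in> P1"
proof -
  have ps: "prob_space (emp N x)"
    using N by (simp add: emp_distr prob_space.prob_space_distr ucm_meas prob_space_uniform_count_measure)
  have "(\<integral>\<^sup>+y. ennreal (norm y) \<partial>emp N x) = (\<Sum>i\<in>{1..N}. ennreal (norm (x i))) / of_nat N"
    using N by (intro nn_integral_emp) auto
  also have "\<dots> < \<infinity>" using N by (simp add: ennreal_divide_eq_top_iff less_top[symmetric])
  moreover have "sets (emp N x) = sets borel" using N by (simp add: emp_distr)
  ultimately show ?thesis using ps unfolding P1_def by simp
qed

lemma return0_P1: "return borel (0::'a::euclidean_space) \<in> P1"
  unfolding P1_def by (simp add: prob_space_return nn_integral_return)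

lemma W1_emp_le:
  fixes x :: "nat \<Rightarrow> 'a::euclidean_space"
  assumes N: "N \<ge> 1"
  shows "W1 (emp N x) (return borel 0) \<le> ennreal ((\<Sum>i\<in>{1..N}. norm (x i)) / N)"
proof -
  let ?U = "uniform_count_measure {1..N}"
  interpret U: prob_space ?U using N by (simp add: prob_space_uniform_count_measure)
  define \<pi> where "\<pi> = distr ?U (borel \<Otimes>\<^sub>M borel) (\<lambda>i. (x i, 0::'a))"
  have pm: "(\<lambda>i. (x i, 0::'a)) \<in> measurable ?U (borel \<Otimes>\<^sub>M borel)"
    by (simp add: measurable_def space_uniform_count_measure sets_uniform_count_measure space_pair_measure)
  have c: "coupling (emp N x) (return borel 0) \<pi>"
    unfolding coupling_def
  proof (intro conjI)
    show "prob_space \<pi>" unfolding \<pi>_def by (rule U.prob_space_distr[OF pm])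
    show "sets \<pi> = sets (borel \<Otimes>\<^sub>M borel)" unfolding \<pi>_def by simp
    show "distr \<pi> borel fst = emp N x"
      unfolding \<pi>_def using N pm by (simp add: distr_distr comp_def emp_distr)
    have "distr ?U borel (\<lambda>_. 0::'a) = return borel 0" by (rule U.distr_const) simp
    then show "distr \<pi> borel snd = return borel 0"
      unfolding \<pi>_def using pm by (simp add: distr_distr comp_def)
  qed
  have "(\<integral>\<^sup>+p. ennreal (dist (fst p) (snd p)) \<partial>\<pi>) = (\<integral>\<^sup>+i. ennreal (norm (x i)) \<partial>?U)"
    unfolding \<pi>_def using pm by (simp add: nn_integral_distr)
  also have "\<dots> = (\<Sum>i\<in>{1..N}. ennreal (1 / real N) * ennreal (norm (x i)))"
    unfolding uniform_count_measure_def by (simp add: nn_integral_point_measure_finite)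
  also have "\<dots> = ennreal ((\<Sum>i\<in>{1..N}. norm (x i)) / N)"
    by (simp add: ennreal_mult[symmetric] sum_divide_distrib sum_ennreal)
  finally have "(\<integral>\<^sup>+p. ennreal (dist (fst p) (snd p)) \<partial>\<pi>) = ennreal ((\<Sum>i\<in>{1..N}. norm (x i)) / N)" .
  then show ?thesis unfolding W1_def using c by (metis (mono_tags) INF_lower mem_Collect_eq)
qed

lemma Dlip_ge:
  assumes "\<mu>1 \<in> P1" "\<mu>2 \<in> P1" "(x1, \<mu>1) \<noteq> (x2, \<mu>2)"
  shows "ennreal (norm (f x1 \<mu>1 z - f x2 \<mu>2 z)) / (ennreal (dist x1 x2) + W1 \<mu>1 \<mu>2) \<le> Dlip f z"
  unfolding Dlip_def
  by (rule SUP_upper2[of "((x1,\<mu>1),(x2,\<mu>2))"]) (use assms in auto)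

lemma ennpow_ge:
  assumes "ennreal a \<le> d" "a \<ge> 0" "p \<ge> 0"
  shows "ennreal (a powr p) \<le> ennpow d p"
proof (cases "d = \<top>")
  case False
  then obtain r where r: "d = ennreal r" "r \<ge> 0" by (cases d) auto
  then have "a \<le> r" using assms by simp
  then show ?thesis using r assms by (simp add: ennpow_def powr_mono2)
qed (simp add: ennpow_def)

lemma Dlip_bound:
  fixes f :: "'a::euclidean_space \<Rightarrow> 'a measure \<Rightarrow> 'b \<Rightarrow> 'a" and \<theta> :: "'b measure"
  assumes mu: "\<mu> \<in> P1" and W: "W1 \<mu> (return borel 0) \<le> ennreal w" and w: "w \<ge> 0" and p: "p \<ge> 1"
    and meas: "(\<lambda>z. f x \<mu> z) \<in> borel_measurable \<theta>" "(\<lambda>z. f 0 (return borel 0) z) \<in> borel_measurable \<theta>"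
    and fin: "(\<integral>\<^sup>+z. ennpow (Dlip f z) p \<partial>\<theta>) = ennreal \<sigma>"
  shows "(\<integral>\<^sup>+z. ennreal (norm (f x \<mu> z - f 0 (return borel 0) z) powr p) \<partial>\<theta>)
           \<le> ennreal \<sigma> * ennreal ((norm x + w) powr p)"
proof -
  define \<Delta> where "\<Delta> z = norm (f x \<mu> z - f 0 (return borel 0) z)" for z
  have \<Delta>m: "(\<lambda>z. ennreal (\<Delta> z powr p)) \<in> borel_measurable \<theta>" unfolding \<Delta>_def using meas by measurable
  have \<Delta>0: "\<Delta> z \<ge> 0" for z by (simp add: \<Delta>_def)
  show ?thesis
  proof (cases "(x, \<mu>) = (0, return borel 0)")
    case True
    then show ?thesis by simp
  next
    case ne: False
    have ge: "ennreal (\<Delta> z) / (ennreal (norm x) + W1 \<mu> (return borel 0)) \<le> Dlip f z" for z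
      using Dlip_ge[OF mu return0_P1 ne, of f z] by (simp add: \<Delta>_def dist_norm)
    show ?thesis
    proof (cases "ennreal (norm x) + W1 \<mu> (return borel 0) = 0")
      case True
      define S where "S = {z \<in> space \<theta>. \<Delta> z > 0}"
      have Sm: "S \<in> sets \<theta>" unfolding S_def \<Delta>_def using meas by measurable
      have "\<top> * indicator S z \<le> ennpow (Dlip f z) p" for z
      proof (cases "z \<in> S")
        case True
        then have "\<Delta> z > 0" by (simp add: S_def)
        then have "Dlip f z = \<top>" using ge[of z] True \<open>_ = 0\<close>
          by (simp add: ennreal_divide_eq_top_iff top_unique)
        then show ?thesis by (simp add: ennpow_def)
      qed simp
      then have "(\<integral>\<^sup>+z. \<top> * indicator S z \<partial>\<theta>) \<le> ennreal \<sigma>"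
        unfolding fin[symmetric] by (rule nn_integral_mono)
      then have "\<top> * emeasure \<theta> S \<le> ennreal \<sigma>" using Sm by (simp add: nn_integral_cmult_indicator)
      then have "emeasure \<theta> S = 0" by (cases "emeasure \<theta> S = 0") (auto simp: ennreal_mult_top top_unique)
      then have "AE z in \<theta>. \<Delta> z = 0" using Sm \<Delta>0
        by (intro AE_I[of _ _ S]) (auto simp: S_def less_le)
      then have "(\<integral>\<^sup>+z. ennreal (\<Delta> z powr p) \<partial>\<theta>) = (\<integral>\<^sup>+z. 0 \<partial>\<theta>)"
        by (intro nn_integral_cong_AE) auto
      then show ?thesis by (simp add: \<Delta>_def)
    next
      case den: False
      have "W1 \<mu> (return borel 0) \<noteq> \<top>" using W by (metis ennreal_neq_top top_unique)
      then obtain v where v: "W1 \<mu> (return borel 0) = ennreal v" "v \<ge> 0" by (cases "W1 \<mu> (return borel 0)") auto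
      have vw: "v \<le> w" using W v w by simp
      define d where "d = norm x + v"
      have dpos: "d > 0" using den v by (simp add: d_def ennreal_plus[symmetric] del: ennreal_plus)
        (metis norm_ge_zero add_nonneg_nonneg order_neq_le_trans)
      define c where "c = norm x + w"
      have dc: "d \<le> c" "c > 0" using vw dpos by (auto simp: d_def c_def)
      have "ennreal (\<Delta> z / c) \<le> Dlip f z" for z
      proof -
        have "\<Delta> z / c \<le> \<Delta> z / d" using dc dpos \<Delta>0[of z] by (intro divide_left_mono) auto
        then have "ennreal (\<Delta> z / c) \<le> ennreal (\<Delta> z) / ennreal d"
          using dpos \<Delta>0[of z] by (simp add: divide_ennreal)
        also have "ennreal d = ennreal (norm x) + W1 \<mu> (return borel 0)"
          using v by (simp add: d_def ennreal_plus)
        finally show ?thesis using ge[of z] by simp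
      qed
      then have "ennreal ((\<Delta> z / c) powr p) \<le> ennpow (Dlip f z) p" for z
        using p dc \<Delta>0[of z] by (intro ennpow_ge) auto
      moreover have "ennreal ((\<Delta> z / c) powr p) = ennreal (\<Delta> z powr p) * ennreal (1 / c powr p)" for z
      proof -
        have "(\<Delta> z / c) powr p = \<Delta> z powr p * (1 / c powr p)"
          using dc \<Delta>0[of z] by (simp add: powr_divide)
        then show ?thesis using dc by (simp add: ennreal_mult[symmetric])
      qed
      ultimately have "ennreal (\<Delta> z powr p) * ennreal (1 / c powr p) \<le> ennpow (Dlip f z) p" for z
        by metis
      then have "(\<integral>\<^sup>+z. ennreal (\<Delta> z powr p) * ennreal (1 / c powr p) \<partial>\<theta>) \<le> ennreal \<sigma>"
        unfolding fin[symmetric] by (rule nn_integral_mono)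
      then have "(\<integral>\<^sup>+z. ennreal (\<Delta> z powr p) \<partial>\<theta>) * ennreal (1 / c powr p) \<le> ennreal \<sigma>"
        using \<Delta>m by (simp add: nn_integral_multc)
      then have "(\<integral>\<^sup>+z. ennreal (\<Delta> z powr p) \<partial>\<theta>) * ennreal (1 / c powr p) * ennreal (c powr p)
                 \<le> ennreal \<sigma> * ennreal (c powr p)"
        by (rule mult_right_mono) simp
      moreover have "ennreal (1 / c powr p) * ennreal (c powr p) = 1"
        using dc by (simp add: ennreal_mult[symmetric])
      ultimately show ?thesis by (simp add: \<Delta>_def c_def mult.assoc)
    qed
  qed
qed

lemma emp_measurable:
  assumes N: "N \<ge> 1"
  shows "(\<lambda>v. emp N v) \<in> measurable (PiM {1..N} (\<lambda>_. borel :: 'a::euclidean_space measure))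
            (restrict_space (subprob_algebra borel) P1)"
proof (rule measurable_restrict_space2)
  show "(\<lambda>v. emp N v) \<in> space (PiM {1..N} (\<lambda>_. borel :: 'a measure)) \<rightarrow> P1"
    using emp_P1[OF N] by auto
  show "(\<lambda>v. emp N v) \<in> measurable (PiM {1..N} (\<lambda>_. borel :: 'a measure)) (subprob_algebra borel)"
  proof (rule measurable_subprob_algebra)
    fix v :: "nat \<Rightarrow> 'a"
    have "emp N v \<in> P1" by (rule emp_P1[OF N])
    then show "subprob_space (emp N v)" "sets (emp N v) = sets borel"
      by (auto simp: P1_def prob_space_imp_subprob_space)
  next
    fix B :: "'a set" assume B: "B \<in> sets borel"
    have "emeasure (emp N v) B = (\<Sum>i\<in>{1..N}. indicator B (v i)) / of_nat N" for v :: "nat \<Rightarrow> 'a"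
    proof -
      have "emeasure (emp N v) B = (\<integral>\<^sup>+y. indicator B y \<partial>emp N v)"
        using B N by (simp add: emp_distr)
      also have "\<dots> = (\<Sum>i\<in>{1..N}. indicator B (v i)) / of_nat N"
        using B N by (intro nn_integral_emp) auto
      finally show ?thesis .
    qed
    moreover have "(\<lambda>v. (\<Sum>i\<in>{1..N}. indicator B (v i) :: ennreal) / of_nat N)
        \<in> borel_measurable (PiM {1..N} (\<lambda>_. borel :: 'a measure))"
      using B by measurable
    ultimately show "(\<lambda>v. emeasure (emp N v) B) \<in> borel_measurable (PiM {1..N} (\<lambda>_. borel :: 'a measure))"
      by simp
  qed
qed

lemma particle_meas:
  fixes M' :: "'w measure"
    and A :: "real^'d::finite^'d"
    and f :: "real^'d \<Rightarrow> (real^'d) measure \<Rightarrow> real^'m::finite \<Rightarrow> real^'d"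
  assumes N: "N \<ge> 1"
    and f_meas: "(\<lambda>(x, \<mu>, z). f x \<mu> z) \<in>
        borel_measurable (borel \<Otimes>\<^sub>M (restrict_space (subprob_algebra borel) P1 \<Otimes>\<^sub>M borel))"
    and X0: "\<And>j. j \<in> {1..N} \<Longrightarrow> X0 N j \<in> borel_measurable M'"
    and eps: "\<And>j k. j \<in> {1..N} \<Longrightarrow> k \<in> {1..n} \<Longrightarrow> eps j k \<in> borel_measurable M'"
  shows "m \<le> n \<Longrightarrow> j \<in> {1..N} \<Longrightarrow> particle A \<delta> f X0 eps N m j \<in> borel_measurable M'"
proof (induction m arbitrary: j)
  case 0
  then show ?case using X0 by simp
next
  case (Suc m)
  let ?P = "\<lambda>j. particle A \<delta> f X0 eps N m j"
  have IH: "\<And>j. j \<in> {1..N} \<Longrightarrow> ?P j \<in> borel_measurable M'" using Suc by simp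
  have r: "(\<lambda>w. \<lambda>j\<in>{1..N}. ?P j w) \<in> measurable M' (PiM {1..N} (\<lambda>_. borel))"
    using IH by (intro measurable_restrict) auto
  have e: "(\<lambda>w. emp N (\<lambda>j. ?P j w)) = (\<lambda>w. emp N (\<lambda>j\<in>{1..N}. ?P j w))"
    by (intro ext emp_cong) simp
  have em: "(\<lambda>w. emp N (\<lambda>j. ?P j w)) \<in> measurable M' (restrict_space (subprob_algebra borel) P1)"
    unfolding e using measurable_comp[OF r emp_measurable[OF N]] by (simp add: comp_def)
  have ep: "eps j (Suc m) \<in> borel_measurable M'" using Suc.prems eps by auto
  have tr: "(\<lambda>w. (?P j w, emp N (\<lambda>j. ?P j w), eps j (Suc m) w))
      \<in> measurable M' (borel \<Otimes>\<^sub>M (restrict_space (subprob_algebra borel) P1 \<Otimes>\<^sub>M borel))"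
    using IH[OF Suc.prems(2)] em ep by (intro measurable_Pair) auto
  have fm: "(\<lambda>w. f (?P j w) (emp N (\<lambda>j. ?P j w)) (eps j (Suc m) w)) \<in> borel_measurable M'"
    using measurable_comp[OF tr f_meas] by (simp add: comp_def)
  have lin: "(\<lambda>x. A *v x) \<in> borel_measurable borel"
    by (intro borel_measurable_continuous_onI linear_continuous_on) (simp add: bounded_linear_mult_right matrix_vector_mul_bounded_linear)
  have am: "(\<lambda>w. A *v ?P j w) \<in> borel_measurable M'"
    using measurable_comp[OF IH[OF Suc.prems(2)] lin] by (simp add: comp_def)
  show ?case using am fm by simp
qed

lemma Int_stable_sigma_sets:
  assumes "st \<subseteq> Pow \<Omega>" shows "Int_stable (sigma_sets \<Omega> st)"
proof -
  interpret sigma_algebra \<Omega> "sigma_sets \<Omega> st" by (rule sigma_algebra_sigma_sets) fact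
  show ?thesis by (auto simp: Int_stable_def)
qed

lemma Int_stable_sets: "Int_stable (sets M)"
  by (auto simp: Int_stable_def)

lemma (in prob_space) pi_indep:
  assumes GX: "indep_set GX VE" and FST: "indep_set FS FT"
    and sub: "FS \<subseteq> VE" and VEi: "\<And>a b. a \<in> FS \<Longrightarrow> b \<in> FT \<Longrightarrow> a \<inter> b \<in> VE"
    and st: "Int_stable GX" "Int_stable FS" "Int_stable FT"
  shows "indep_set (sigma_sets (space M) {a \<inter> b | a b. a \<in> GX \<and> b \<in> FS}) FT"
proof -
  let ?P = "{a \<inter> b | a b. a \<in> GX \<and> b \<in> FS}"
  have evX: "GX \<subseteq> events" using indep_setD_ev1[OF GX] .
  have evS: "FS \<subseteq> events" using indep_setD_ev1[OF FST] .
  have evT: "FT \<subseteq> events" using indep_setD_ev2[OF FST] .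
  have evP: "?P \<subseteq> events" using evX evS by auto
  have ind: "indep_set ?P FT"
  proof (rule indep_setI[OF evP evT])
    fix ab c assume "ab \<in> ?P" and c: "c \<in> FT"
    then obtain a b where ab: "ab = a \<inter> b" "a \<in> GX" "b \<in> FS" by auto
    have "prob (ab \<inter> c) = prob (a \<inter> (b \<inter> c))" by (simp add: ab Int_assoc)
    also have "\<dots> = prob a * prob (b \<inter> c)" using indep_setD[OF GX ab(2) VEi[OF ab(3) c]] .
    also have "\<dots> = prob a * (prob b * prob c)" using indep_setD[OF FST ab(3) c] by simp
    also have "\<dots> = prob (a \<inter> b) * prob c" using indep_setD[OF GX ab(2) subsetD[OF sub ab(3)]] by simp
    finally show "prob (ab \<inter> c) = prob ab * prob c" by (simp add: ab)
  qed
  have stP: "Int_stable ?P"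
  proof (unfold Int_stable_def, safe)
    fix a1 b1 a2 b2 assume "a1 \<in> GX" "b1 \<in> FS" "a2 \<in> GX" "b2 \<in> FS"
    then show "\<exists>a b. a1 \<inter> b1 \<inter> (a2 \<inter> b2) = a \<inter> b \<and> a \<in> GX \<and> b \<in> FS"
      using st unfolding Int_stable_def by (intro exI[of _ "a1 \<inter> a2"] exI[of _ "b1 \<inter> b2"]) blast
  qed
  have "indep_sets (\<lambda>i. sigma_sets (space M) (case_bool ?P FT i)) UNIV"
    using ind unfolding indep_set_def
    by (rule indep_sets_sigma) (use stP st in \<open>auto split: bool.split\<close>)
  then have "indep_sets (case_bool (sigma_sets (space M) ?P) FT) UNIV"
    by (rule indep_sets_mono_sets) (auto split: bool.split intro: sigma_sets.Basic)
  then show ?thesis unfolding indep_set_def .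
qed

lemma (in prob_space) step_indep:
  fixes A :: "real^'d::finite^'d"
    and f :: "real^'d \<Rightarrow> (real^'d) measure \<Rightarrow> real^'m::finite \<Rightarrow> real^'d"
    and X0 :: "nat \<Rightarrow> nat \<Rightarrow> 'a \<Rightarrow> real^'d"
    and eps :: "nat \<Rightarrow> nat \<Rightarrow> 'a \<Rightarrow> real^'m"
  assumes N: "N \<ge> 1"
    and f_meas: "(\<lambda>(x, \<mu>, z). f x \<mu> z) \<in>
        borel_measurable (borel \<Otimes>\<^sub>M (restrict_space (subprob_algebra borel) P1 \<Otimes>\<^sub>M borel))"
    and X0_meas: "\<And>i. i \<in> {1..N} \<Longrightarrow> X0 N i \<in> borel_measurable M"
    and eps_meas: "\<And>i n. i \<ge> 1 \<Longrightarrow> n \<ge> 1 \<Longrightarrow> eps i n \<in> borel_measurable M"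
    and eps_indep: "indep_vars (\<lambda>_. borel) (\<lambda>(i, n). eps i n) ({1..} \<times> {1..})"
    and indep_init: "indep_set
        (sets (vimage_algebra (space M) (\<lambda>w. \<lambda>i\<in>{1..N}. X0 N i w) (PiM {1..N} (\<lambda>_. borel))))
        (sets (vimage_algebra (space M) (\<lambda>w. \<lambda>(i, n)\<in>{1..} \<times> {1..}. eps i n w)
                 (PiM ({1..} \<times> {1..}) (\<lambda>_. borel))))"
    and i: "i \<ge> 1"
  shows "distr M (PiM {1..N} (\<lambda>_. borel)) (\<lambda>w. \<lambda>j\<in>{1..N}. particle A \<delta> f X0 eps N n j w)
           \<Otimes>\<^sub>M distr M (borel :: (real^'m) measure) (eps i (Suc n))
         = distr M (PiM {1..N} (\<lambda>_. borel) \<Otimes>\<^sub>M borel)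
             (\<lambda>w. (\<lambda>j\<in>{1..N}. particle A \<delta> f X0 eps N n j w, eps i (Suc n) w))"
proof -
  define I :: "(nat \<times> nat) set" where "I = {1..} \<times> {1..}"
  define gen where "gen k = {(\<lambda>(i, n). eps i n) k -` B \<inter> space M | B. B \<in> sets (borel :: (real^'m) measure)}" for k
  define GE where "GE S = sigma_sets (space M) (\<Union>k\<in>S. gen k)" for S
  define S :: "(nat \<times> nat) set" where "S = {1..} \<times> {1..n}"
  define T where "T = {(i, Suc n)}"
  define GX where "GX = sets (vimage_algebra (space M) (\<lambda>w. \<lambda>i\<in>{1..N}. X0 N i w) (PiM {1..N} (\<lambda>_. borel)))"
  define VE where "VE = sets (vimage_algebra (space M) (\<lambda>w. \<lambda>(i, n)\<in>I. eps i n w) (PiM I (\<lambda>_. borel :: (real^'m) measure)))"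
  have geni: "indep_sets gen I" using eps_indep unfolding indep_vars_def2 gen_def I_def by simp
  have gen_ev: "gen k \<subseteq> events" if "k \<in> I" for k
    using geni that unfolding indep_sets_def by auto
  have gen_pow: "(\<Union>k\<in>S'. gen k) \<subseteq> Pow (space M)" if "S' \<subseteq> I" for S'
    using gen_ev that sets.sets_into_space by blast
  have gen_VE: "gen k \<subseteq> VE" if k: "k \<in> I" for k
  proof
    fix a assume "a \<in> gen k"
    then obtain B where B: "B \<in> sets borel" "a = (\<lambda>(i, n). eps i n) k -` B \<inter> space M"
      unfolding gen_def by auto
    define C where "C = {h \<in> space (PiM I (\<lambda>_. borel :: (real^'m) measure)). h k \<in> B}"
    have C: "C \<in> sets (PiM I (\<lambda>_. borel :: (real^'m) measure))"
    proof -
      have "(\<lambda>h. h k) -` B \<inter> space (PiM I (\<lambda>_. borel :: (real^'m) measure)) \<in> sets (PiM I (\<lambda>_. borel :: (real^'m) measure))"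
        by (rule measurable_sets[OF measurable_component_singleton[OF k] B(1)])
      moreover have "(\<lambda>h. h k) -` B \<inter> space (PiM I (\<lambda>_. borel :: (real^'m) measure)) = C"
        unfolding C_def by blast
      ultimately show ?thesis by simp
    qed
    have "a = (\<lambda>w. \<lambda>(i, n)\<in>I. eps i n w) -` C \<inter> space M"
      using k unfolding B(2) C_def by (auto simp: space_PiM split: prod.splits)
    then show "a \<in> VE" unfolding VE_def sets_vimage_algebra using C by (auto intro!: sigma_sets.Basic)
  qed
  interpret VE: sigma_algebra "space M" VE
    unfolding VE_def using sets.sigma_algebra_axioms[of "vimage_algebra (space M) (\<lambda>w. \<lambda>(i, n)\<in>I. eps i n w) (PiM I (\<lambda>_. borel :: (real^'m) measure))"]
    by simp
  have GE_VE: "GE S' \<subseteq> VE" if "S' \<subseteq> I" for S'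
    unfolding GE_def using gen_VE that by (intro VE.sigma_sets_subset) blast
  have ST: "S \<subseteq> I" "T \<subseteq> I" "S \<inter> T = {}" using i by (auto simp: S_def T_def I_def)
  have GST: "indep_set (GE S) (GE T)"
  proof -
    have "indep_sets (\<lambda>j. sigma_sets (space M) (\<Union>k\<in>case_bool S T j. gen k)) UNIV"
    proof (rule indep_sets_collect_sigma)
      show "indep_sets gen (\<Union>j\<in>UNIV. case_bool S T j)"
        by (rule indep_sets_mono_index[OF _ geni]) (use ST in \<open>auto split: bool.split_asm\<close>)
      show "Int_stable (gen k)" for k
        unfolding gen_def
        apply (auto simp: Int_stable_def)
        apply (rule_tac x="B \<inter> Ba" in exI)
        apply auto
        done
      show "disjoint_family_on (case_bool S T) UNIV"
        using ST by (auto simp: disjoint_family_on_def split: bool.split)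
    qed
    moreover have "(\<lambda>j. sigma_sets (space M) (\<Union>k\<in>case_bool S T j. gen k)) = case_bool (GE S) (GE T)"
      by (auto simp: GE_def fun_eq_iff split: bool.split)
    ultimately show ?thesis unfolding indep_set_def by simp
  qed
  have GXVE: "indep_set GX VE" using indep_init unfolding GX_def VE_def I_def .
  have stX: "Int_stable GX" unfolding GX_def by (rule Int_stable_sets)
  have stGE: "Int_stable (GE S')" if "S' \<subseteq> I" for S'
    unfolding GE_def by (rule Int_stable_sigma_sets[OF gen_pow[OF that]])
  have "indep_set (sigma_sets (space M) {a \<inter> b | a b. a \<in> GX \<and> b \<in> GE S}) (GE T)"
  proof (rule pi_indep[OF GXVE GST])
    show "GE S \<subseteq> VE" using GE_VE ST by blast
    fix a b assume "a \<in> GE S" "b \<in> GE T"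
    then show "a \<inter> b \<in> VE" using GE_VE ST by blast
  qed (use stX stGE ST in auto)
  define P where "P = {a \<inter> b | a b. a \<in> GX \<and> b \<in> GE S}"
  have indP: "indep_set (sigma_sets (space M) P) (GE T)" unfolding P_def by fact
  have GX_pow: "GX \<subseteq> Pow (space M)" unfolding GX_def
    using sets.sets_into_space[of _ "vimage_algebra (space M) (\<lambda>w. \<lambda>i\<in>{1..N}. X0 N i w) (PiM {1..N} (\<lambda>_. borel))"]
    by auto
  have topX: "space M \<in> GX" unfolding GX_def
    using sets.top[of "vimage_algebra (space M) (\<lambda>w. \<lambda>i\<in>{1..N}. X0 N i w) (PiM {1..N} (\<lambda>_. borel))"]
    by simp
  have topS: "space M \<in> GE S" unfolding GE_def by (rule sigma_sets_top)
  have P_pow: "P \<subseteq> Pow (space M)" unfolding P_def using GX_pow by auto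
  define MF where "MF = sigma (space M) P"
  have spMF: "space MF = space M" unfolding MF_def by (simp add: space_measure_of_conv)
  have setsMF: "sets MF = sigma_sets (space M) P" unfolding MF_def using P_pow by (simp add: sets_measure_of)
  have X0MF: "X0 N j \<in> borel_measurable MF" if j: "j \<in> {1..N}" for j
  proof (rule measurableI)
    fix B :: "(real^'d) set" assume B: "B \<in> sets borel"
    define C where "C = {h \<in> space (PiM {1..N} (\<lambda>_. borel :: (real^'d) measure)). h j \<in> B}"
    have C: "C \<in> sets (PiM {1..N} (\<lambda>_. borel :: (real^'d) measure))"
    proof -
      have "(\<lambda>h. h j) -` B \<inter> space (PiM {1..N} (\<lambda>_. borel :: (real^'d) measure)) \<in> sets (PiM {1..N} (\<lambda>_. borel :: (real^'d) measure))"
        by (rule measurable_sets[OF measurable_component_singleton[OF j] B])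
      moreover have "(\<lambda>h. h j) -` B \<inter> space (PiM {1..N} (\<lambda>_. borel :: (real^'d) measure)) = C"
        unfolding C_def by blast
      ultimately show ?thesis by simp
    qed
    have "X0 N j -` B \<inter> space M = (\<lambda>w. \<lambda>i\<in>{1..N}. X0 N i w) -` C \<inter> space M"
      using j unfolding C_def by (auto simp: space_PiM)
    then have a: "X0 N j -` B \<inter> space M \<in> GX"
      unfolding GX_def sets_vimage_algebra using C by (auto intro!: sigma_sets.Basic)
    have "X0 N j -` B \<inter> space M \<in> P" unfolding P_def using a topS by blast
    then show "X0 N j -` B \<inter> space MF \<in> sets MF" unfolding spMF setsMF by (rule sigma_sets.Basic)
  qed simp
  have epsMF: "eps j k \<in> borel_measurable MF" if j: "j \<in> {1..N}" and k: "k \<in> {1..n}" for j k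
  proof (rule measurableI)
    fix B :: "(real^'m) set" assume B: "B \<in> sets borel"
    have "eps j k -` B \<inter> space M \<in> gen (j, k)" unfolding gen_def using B by auto
    moreover have "(j, k) \<in> S" using j k by (auto simp: S_def)
    ultimately have "eps j k -` B \<inter> space M \<in> GE S" unfolding GE_def by (blast intro: sigma_sets.Basic)
    then have "eps j k -` B \<inter> space M \<in> P" unfolding P_def using topX by blast
    then show "eps j k -` B \<inter> space MF \<in> sets MF" unfolding spMF setsMF by (rule sigma_sets.Basic)
  qed simp
  have pMF: "particle A \<delta> f X0 eps N n j \<in> borel_measurable MF" if "j \<in> {1..N}" for j
    by (rule particle_meas[where M'=MF and n=n and m=n and ?X0.0=X0 and eps=eps and f=f and N=N and A=A and \<delta>=\<delta>, OF N f_meas X0MF epsMF]) (use that in auto)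
  have VMF: "(\<lambda>w. \<lambda>j\<in>{1..N}. particle A \<delta> f X0 eps N n j w) \<in> measurable MF (PiM {1..N} (\<lambda>_. borel))"
    using pMF by (intro measurable_restrict) auto
  have pM: "particle A \<delta> f X0 eps N n j \<in> borel_measurable M" if "j \<in> {1..N}" for j
    by (rule particle_meas[where M'=M and n=n and m=n and ?X0.0=X0 and eps=eps and f=f and N=N and A=A and \<delta>=\<delta>, OF N f_meas]) (use that X0_meas eps_meas in auto)
  have VM: "(\<lambda>w. \<lambda>j\<in>{1..N}. particle A \<delta> f X0 eps N n j w) \<in> measurable M (PiM {1..N} (\<lambda>_. borel))"
    using pM by (intro measurable_restrict) auto
  have eM: "eps i (Suc n) \<in> borel_measurable M" using eps_meas i by auto
  define V where "V = (\<lambda>w. \<lambda>j\<in>{1..N}. particle A \<delta> f X0 eps N n j w)"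
  let ?S = "distr M (PiM {1..N} (\<lambda>_. borel :: (real^'d) measure)) V"
  let ?T = "distr M (borel :: (real^'m) measure) (eps i (Suc n))"
  interpret X: prob_space ?S by (rule prob_space_distr) (unfold V_def, rule VM)
  interpret Y: prob_space ?T by (rule prob_space_distr) (rule eM)
  interpret XY: pair_prob_space ?S ?T ..
  have XY: "(\<lambda>w. (V w, eps i (Suc n) w)) \<in> measurable M (PiM {1..N} (\<lambda>_. borel) \<Otimes>\<^sub>M borel)"
    unfolding V_def by (rule measurable_Pair[OF VM eM])
  have "?S \<Otimes>\<^sub>M ?T = distr M (PiM {1..N} (\<lambda>_. borel) \<Otimes>\<^sub>M borel) (\<lambda>w. (V w, eps i (Suc n) w))"
  proof (rule pair_measure_eqI)
    show "sigma_finite_measure ?S" ..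
    show "sigma_finite_measure ?T" ..
    fix A B assume A: "A \<in> sets ?S" and B: "B \<in> sets ?T"
    then have A': "A \<in> sets (PiM {1..N} (\<lambda>_. borel :: (real^'d) measure))" and B': "B \<in> sets (borel :: (real^'m) measure)" by auto
    have a: "V -` A \<inter> space M \<in> sigma_sets (space M) P"
      using measurable_sets[OF VMF A'] unfolding spMF setsMF V_def .
    have b: "eps i (Suc n) -` B \<inter> space M \<in> GE T"
    proof -
      have "eps i (Suc n) -` B \<inter> space M \<in> gen (i, Suc n)" unfolding gen_def using B' by auto
      then show ?thesis unfolding GE_def T_def by (auto intro: sigma_sets.Basic)
    qed
    have "emeasure (distr M (PiM {1..N} (\<lambda>_. borel) \<Otimes>\<^sub>M borel) (\<lambda>w. (V w, eps i (Suc n) w))) (A \<times> B)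
        = emeasure M ((\<lambda>w. (V w, eps i (Suc n) w)) -` (A \<times> B) \<inter> space M)"
      using A' B' by (intro emeasure_distr[OF XY]) auto
    also have "(\<lambda>w. (V w, eps i (Suc n) w)) -` (A \<times> B) \<inter> space M = (V -` A \<inter> space M) \<inter> (eps i (Suc n) -` B \<inter> space M)"
      by auto
    also have "emeasure M \<dots> = emeasure M (V -` A \<inter> space M) * emeasure M (eps i (Suc n) -` B \<inter> space M)"
      using indep_setD[OF indP a b] by (simp add: emeasure_eq_measure measure_nonneg ennreal_mult)
    also have "\<dots> = emeasure ?S A * emeasure ?T B"
      using A' B' VM eM by (simp add: emeasure_distr V_def)
    finally show "emeasure ?S A * emeasure ?T B = emeasure (distr M (PiM {1..N} (\<lambda>_. borel) \<Otimes>\<^sub>M borel) (\<lambda>w. (V w, eps i (Suc n) w))) (A \<times> B)"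
      by simp
  qed simp
  then show ?thesis unfolding V_def .
qed

lemma pointwise_bound:
  fixes A :: "real^'d::finite^'d" and x y0 y1 :: "real^'d"
  assumes A3: "onorm (\<lambda>x. A *v x) \<le> exp (- \<omega>)" and d: "\<delta> > 0"
  shows "norm (A *v x + \<delta> *\<^sub>R y1) \<le> exp (- \<omega>) * norm x + \<delta> * norm (y1 - y0) + \<delta> * norm y0"
proof -
  have "norm (A *v x) \<le> onorm (\<lambda>x. A *v x) * norm x"
    by (rule onorm) (simp add: matrix_vector_mul_bounded_linear)
  also have "\<dots> \<le> exp (- \<omega>) * norm x" using A3 by (intro mult_right_mono) auto
  finally have 1: "norm (A *v x) \<le> exp (- \<omega>) * norm x" .
  have "norm y1 \<le> norm (y1 - y0) + norm y0" by (metis norm_triangle_sub add.commute)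
  then have 2: "norm (\<delta> *\<^sub>R y1) \<le> \<delta> * norm (y1 - y0) + \<delta> * norm y0"
    using d by (simp add: distrib_left[symmetric])
  have "norm (A *v x + \<delta> *\<^sub>R y1) \<le> norm (A *v x) + norm (\<delta> *\<^sub>R y1)" by (rule norm_triangle_ineq)
  then show ?thesis using 1 2 by linarith
qed

lemma D1_meas:
  fixes f :: "real^'d::finite \<Rightarrow> (real^'d) measure \<Rightarrow> real^'m::finite \<Rightarrow> real^'d"
  assumes f_meas: "(\<lambda>(x, \<mu>, z). f x \<mu> z) \<in>
        borel_measurable (borel \<Otimes>\<^sub>M (restrict_space (subprob_algebra borel) P1 \<Otimes>\<^sub>M borel))"
    and mu: "\<mu> \<in> P1"
  shows "(\<lambda>z. f x \<mu> z) \<in> borel_measurable borel"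
proof -
  have sp: "\<mu> \<in> space (restrict_space (subprob_algebra borel) P1)"
    using mu by (auto simp: space_restrict_space space_subprob_algebra P1_def prob_space_imp_subprob_space)
  have "(\<lambda>z. (x, \<mu>, z)) \<in> measurable borel (borel \<Otimes>\<^sub>M (restrict_space (subprob_algebra borel) P1 \<Otimes>\<^sub>M borel))"
    using sp by (intro measurable_Pair measurable_const) auto
  from measurable_comp[OF this f_meas] show ?thesis by (simp add: comp_def)
qed

lemma (in prob_space) step_bound:
  fixes A :: "real^'d::finite^'d"
    and f :: "real^'d \<Rightarrow> (real^'d) measure \<Rightarrow> real^'m::finite \<Rightarrow> real^'d"
    and X0 :: "nat \<Rightarrow> nat \<Rightarrow> 'a \<Rightarrow> real^'d"
    and eps :: "nat \<Rightarrow> nat \<Rightarrow> 'a \<Rightarrow> real^'m"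
    and \<theta> :: "(real^'m) measure"
  assumes N: "N \<ge> 1" and j: "j \<in> {1..N}" and alpha: "\<alpha> > 0" and dl: "\<delta> > 0"
    and f_meas: "(\<lambda>(x, \<mu>, z). f x \<mu> z) \<in>
        borel_measurable (borel \<Otimes>\<^sub>M (restrict_space (subprob_algebra borel) P1 \<Otimes>\<^sub>M borel))"
    and theta: "sets \<theta> = sets borel"
    and A3: "onorm (\<lambda>x. A *v x) \<le> exp (- \<omega>)"
    and Xm: "\<And>k. k \<in> {1..N} \<Longrightarrow> particle A \<delta> f X0 eps N n k \<in> borel_measurable M"
    and em: "eps j (Suc n) \<in> borel_measurable M"
    and elaw: "distr M borel (eps j (Suc n)) = \<theta>"
    and indep: "distr M (PiM {1..N} (\<lambda>_. borel)) (\<lambda>w. \<lambda>k\<in>{1..N}. particle A \<delta> f X0 eps N n k w)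
           \<Otimes>\<^sub>M distr M (borel :: (real^'m) measure) (eps j (Suc n))
         = distr M (PiM {1..N} (\<lambda>_. borel) \<Otimes>\<^sub>M borel)
             (\<lambda>w. (\<lambda>k\<in>{1..N}. particle A \<delta> f X0 eps N n k w, eps j (Suc n) w))"
    and sig: "(\<integral>\<^sup>+z. ennpow (Dlip f z) (1 + \<alpha>) \<partial>\<theta>) = ennreal \<sigma>" "\<sigma> \<ge> 0"
    and kap: "(\<integral>\<^sup>+z. ennreal (D1 f z powr (1 + \<alpha>)) \<partial>\<theta>) = ennreal \<kappa>" "\<kappa> \<ge> 0"
    and l: "l1 > 0" "l2 > 0" "l3 > 0" "l1 + l2 + l3 = 1"
  shows "(\<integral>\<^sup>+w. ennreal (norm (particle A \<delta> f X0 eps N (Suc n) j w) powr (1 + \<alpha>)) \<partial>M)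
     \<le> ennreal (l1 powr (-\<alpha>) * exp (-\<omega>) powr (1+\<alpha>)) * (\<integral>\<^sup>+w. ennreal (norm (particle A \<delta> f X0 eps N n j w) powr (1 + \<alpha>)) \<partial>M)
       + ennreal (l2 powr (-\<alpha>) * \<delta> powr (1+\<alpha>) * (\<sigma> * 2 powr \<alpha>)) *
          ((\<integral>\<^sup>+w. ennreal (norm (particle A \<delta> f X0 eps N n j w) powr (1 + \<alpha>)) \<partial>M)
           + (\<Sum>k\<in>{1..N}. \<integral>\<^sup>+w. ennreal (norm (particle A \<delta> f X0 eps N n k w) powr (1 + \<alpha>)) \<partial>M) / of_nat N)
       + ennreal (l3 powr (-\<alpha>) * \<delta> powr (1+\<alpha>) * \<kappa>)"
proof -
  define p where "p = 1 + \<alpha>"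
  have p1: "p \<ge> 1" using alpha by (simp add: p_def)
  define X where "X k w = particle A \<delta> f X0 eps N n k w" for k w
  define \<epsilon> where "\<epsilon> = eps j (Suc n)"
  define \<delta>0 where "\<delta>0 = (return borel 0 :: (real^'d) measure)"
  define \<Delta> where "\<Delta> w = norm (f (X j w) (emp N (\<lambda>k. X k w)) (\<epsilon> w) - f 0 \<delta>0 (\<epsilon> w))" for w
  define d1 where "d1 w = D1 f (\<epsilon> w)" for w
  define c1 where "c1 = l1 powr (-\<alpha>) * exp (-\<omega>) powr p"
  define c2 where "c2 = l2 powr (-\<alpha>) * \<delta> powr p"
  define c3 where "c3 = l3 powr (-\<alpha>) * \<delta> powr p"
  define IX where "IX k = (\<integral>\<^sup>+w. ennreal (norm (X k w) powr p) \<partial>M)" for k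
  have c: "c1 \<ge> 0" "c2 \<ge> 0" "c3 \<ge> 0" by (auto simp: c1_def c2_def c3_def)
  have Xm': "X k \<in> borel_measurable M" if "k \<in> {1..N}" for k unfolding X_def[abs_def] using Xm[OF that] by simp
  have em': "\<epsilon> \<in> borel_measurable M" using em by (simp add: \<epsilon>_def)
  have V: "(\<lambda>w. \<lambda>k\<in>{1..N}. X k w) \<in> measurable M (PiM {1..N} (\<lambda>_. borel))"
    using Xm' by (intro measurable_restrict) auto
  have empeq: "emp N (\<lambda>k. X k w) = emp N (\<lambda>k\<in>{1..N}. X k w)" for w by (rule emp_cong) simp
  have empm: "(\<lambda>w. emp N (\<lambda>k. X k w)) \<in> measurable M (restrict_space (subprob_algebra borel) P1)"
    unfolding empeq using measurable_comp[OF V emp_measurable[OF N]] by (simp add: comp_def)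
  have fm: "(\<lambda>w. f (X j w) (emp N (\<lambda>k. X k w)) (\<epsilon> w)) \<in> borel_measurable M"
    using measurable_comp[OF measurable_Pair[OF Xm'[OF j] measurable_Pair[OF empm em']] f_meas]
    by (simp add: comp_def)
  have f0m: "(\<lambda>z. f 0 \<delta>0 z) \<in> borel_measurable borel" unfolding \<delta>0_def by (rule D1_meas[OF f_meas return0_P1])
  have f0m': "(\<lambda>w. f 0 \<delta>0 (\<epsilon> w)) \<in> borel_measurable M" using measurable_comp[OF em' f0m] by (simp add: comp_def)
  have \<Delta>m: "\<Delta> \<in> borel_measurable M" unfolding \<Delta>_def using fm f0m' by measurable
  have d1m: "d1 \<in> borel_measurable M" unfolding d1_def D1_def using f0m'[unfolded \<delta>0_def] by measurable
  have pw: "norm (particle A \<delta> f X0 eps N (Suc n) j w) \<le> exp (-\<omega>) * norm (X j w) + \<delta> * \<Delta> w + \<delta> * d1 w" for w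
    unfolding X_def \<Delta>_def d1_def D1_def \<epsilon>_def \<delta>0_def
    by (simp only: particle.simps) (rule pointwise_bound[OF A3 dl])
  have pw2: "ennreal (norm (particle A \<delta> f X0 eps N (Suc n) j w) powr p)
      \<le> ennreal (c1 * norm (X j w) powr p) + ennreal (c2 * \<Delta> w powr p) + ennreal (c3 * d1 w powr p)" for w
  proof -
    have nn: "\<Delta> w \<ge> 0" "d1 w \<ge> 0" by (auto simp: \<Delta>_def d1_def D1_def)
    have "norm (particle A \<delta> f X0 eps N (Suc n) j w) powr p \<le> (exp (-\<omega>) * norm (X j w) + \<delta> * \<Delta> w + \<delta> * d1 w) powr p"
      using pw[of w] p1 by (intro powr_mono2) auto
    also have "\<dots> \<le> l1 powr (1 - p) * (exp (-\<omega>) * norm (X j w)) powr p + l2 powr (1 - p) * (\<delta> * \<Delta> w) powr p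
        + l3 powr (1 - p) * (\<delta> * d1 w) powr p"
      using nn dl by (intro three_powr[OF p1 _ _ _ l]) auto
    also have "\<dots> = c1 * norm (X j w) powr p + c2 * \<Delta> w powr p + c3 * d1 w powr p"
      using nn dl by (simp add: c1_def c2_def c3_def p_def powr_mult)
    finally have "norm (particle A \<delta> f X0 eps N (Suc n) j w) powr p \<le> c1 * norm (X j w) powr p + c2 * \<Delta> w powr p + c3 * d1 w powr p" .
    then show ?thesis using c nn by (simp add: ennreal_plus[symmetric] del: ennreal_plus)
  qed
  have int1: "(\<integral>\<^sup>+w. ennreal (norm (particle A \<delta> f X0 eps N (Suc n) j w) powr p) \<partial>M)
      \<le> ennreal c1 * IX j + ennreal c2 * (\<integral>\<^sup>+w. ennreal (\<Delta> w powr p) \<partial>M) + ennreal c3 * (\<integral>\<^sup>+w. ennreal (d1 w powr p) \<partial>M)"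
  proof -
    have "(\<integral>\<^sup>+w. ennreal (norm (particle A \<delta> f X0 eps N (Suc n) j w) powr p) \<partial>M)
       \<le> (\<integral>\<^sup>+w. ennreal c1 * ennreal (norm (X j w) powr p) + ennreal c2 * ennreal (\<Delta> w powr p) + ennreal c3 * ennreal (d1 w powr p) \<partial>M)"
      using pw2 c by (intro nn_integral_mono) (simp add: ennreal_mult)
    also have "\<dots> = ennreal c1 * IX j + ennreal c2 * (\<integral>\<^sup>+w. ennreal (\<Delta> w powr p) \<partial>M) + ennreal c3 * (\<integral>\<^sup>+w. ennreal (d1 w powr p) \<partial>M)"
      unfolding IX_def using Xm'[OF j] \<Delta>m d1m
      by (simp add: nn_integral_add nn_integral_cmult)
    finally show ?thesis .
  qed
  have Dint: "(\<integral>\<^sup>+w. ennreal (d1 w powr p) \<partial>M) = ennreal \<kappa>"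
  proof -
    have D1m: "(\<lambda>z. ennreal (D1 f z powr p)) \<in> borel_measurable (distr M borel \<epsilon>)"
      unfolding D1_def using f0m[unfolded \<delta>0_def] by measurable
    have "(\<integral>\<^sup>+w. ennreal (d1 w powr p) \<partial>M) = (\<integral>\<^sup>+z. ennreal (D1 f z powr p) \<partial>distr M borel \<epsilon>)"
      unfolding d1_def using D1m by (simp add: nn_integral_distr[OF em'])
    also have "\<dots> = ennreal \<kappa>" using kap elaw by (simp add: \<epsilon>_def p_def)
    finally show ?thesis .
  qed
  define G where "G = (\<lambda>vz::(nat \<Rightarrow> real^'d) \<times> (real^'m).
      ennreal (norm (f (fst vz j) (emp N (fst vz)) (snd vz) - f 0 \<delta>0 (snd vz)) powr p))"
  have h1: "(\<lambda>vz::(nat \<Rightarrow> real^'d) \<times> (real^'m). f (fst vz j) (emp N (fst vz)) (snd vz))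
      \<in> borel_measurable (PiM {1..N} (\<lambda>_. borel) \<Otimes>\<^sub>M borel)"
  proof -
    have "(\<lambda>vz::(nat \<Rightarrow> real^'d) \<times> (real^'m). (fst vz j, emp N (fst vz), snd vz))
      \<in> measurable (PiM {1..N} (\<lambda>_. borel) \<Otimes>\<^sub>M borel) (borel \<Otimes>\<^sub>M (restrict_space (subprob_algebra borel) P1 \<Otimes>\<^sub>M borel))"
    proof -
      have a1: "(\<lambda>vz::(nat \<Rightarrow> real^'d) \<times> (real^'m). fst vz j) \<in> borel_measurable (PiM {1..N} (\<lambda>_. borel) \<Otimes>\<^sub>M borel)"
        using measurable_comp[OF measurable_fst measurable_component_singleton[OF j]] by (simp add: comp_def)
      have a2: "(\<lambda>vz::(nat \<Rightarrow> real^'d) \<times> (real^'m). emp N (fst vz)) \<in> measurable (PiM {1..N} (\<lambda>_. borel) \<Otimes>\<^sub>M borel) (restrict_space (subprob_algebra borel) P1)"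
        using measurable_comp[OF measurable_fst emp_measurable[OF N]] by (simp add: comp_def)
      show ?thesis by (intro measurable_Pair a1 a2 measurable_snd)
    qed
    from measurable_comp[OF this f_meas] show ?thesis by (simp add: comp_def)
  qed
  have h2: "(\<lambda>vz::(nat \<Rightarrow> real^'d) \<times> (real^'m). f 0 \<delta>0 (snd vz)) \<in> borel_measurable (PiM {1..N} (\<lambda>_. borel) \<Otimes>\<^sub>M borel)"
    using measurable_comp[OF measurable_snd f0m] by (simp add: comp_def)
  have Gm: "G \<in> borel_measurable (PiM {1..N} (\<lambda>_. borel) \<Otimes>\<^sub>M borel)"
    unfolding G_def using h1 h2 by measurable
  define V where "V w = (\<lambda>k\<in>{1..N}. X k w)" for w
  have Vm: "V \<in> measurable M (PiM {1..N} (\<lambda>_. borel))" unfolding V_def[abs_def] by (rule V)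
  have \<Delta>G: "ennreal (\<Delta> w powr p) = G (V w, \<epsilon> w)" for w
    using j by (simp add: G_def \<Delta>_def V_def empeq)
  let ?S = "distr M (PiM {1..N} (\<lambda>_. borel :: (real^'d) measure)) V"
  let ?T = "distr M (borel :: (real^'m) measure) \<epsilon>"
  interpret SS: prob_space ?S by (rule prob_space_distr) (rule Vm)
  interpret TT: prob_space ?T by (rule prob_space_distr) (rule em')
  interpret ST: pair_prob_space ?S ?T ..
  have ind': "?S \<Otimes>\<^sub>M ?T = distr M (PiM {1..N} (\<lambda>_. borel) \<Otimes>\<^sub>M borel) (\<lambda>w. (V w, \<epsilon> w))"
    using indep unfolding V_def X_def \<epsilon>_def .
  have "(\<integral>\<^sup>+w. ennreal (\<Delta> w powr p) \<partial>M) = (\<integral>\<^sup>+w. G (V w, \<epsilon> w) \<partial>M)" by (simp add: \<Delta>G)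
  also have "\<dots> = (\<integral>\<^sup>+vz. G vz \<partial>distr M (PiM {1..N} (\<lambda>_. borel) \<Otimes>\<^sub>M borel) (\<lambda>w. (V w, \<epsilon> w)))"
    by (rule nn_integral_distr[OF measurable_Pair[OF Vm em'], symmetric]) (use Gm in simp)
  also have "\<dots> = (\<integral>\<^sup>+vz. G vz \<partial>(?S \<Otimes>\<^sub>M ?T))" by (simp only: ind')
  also have "\<dots> = (\<integral>\<^sup>+v. (\<integral>\<^sup>+z. G (v, z) \<partial>?T) \<partial>?S)"
  proof -
    have seq: "sets (?S \<Otimes>\<^sub>M ?T) = sets (PiM {1..N} (\<lambda>_. borel) \<Otimes>\<^sub>M borel)"
      by (intro sets_pair_measure_cong) simp_all
    have Gm': "G \<in> borel_measurable (?S \<Otimes>\<^sub>M ?T)" using measurable_cong_sets[OF seq refl] Gm by simp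
    show ?thesis by (rule TT.nn_integral_fst[OF Gm', symmetric])
  qed
  also have "\<dots> \<le> (\<integral>\<^sup>+v. ennreal \<sigma> * ennreal ((norm (v j) + (\<Sum>k\<in>{1..N}. norm (v k)) / N) powr p) \<partial>?S)"
  proof (rule nn_integral_mono)
    fix v :: "nat \<Rightarrow> real^'d"
    have m1: "(\<lambda>z. f (v j) (emp N v) z) \<in> borel_measurable \<theta>"
      using D1_meas[OF f_meas emp_P1[OF N]] by (simp add: measurable_cong_sets[OF theta refl])
    have m2: "(\<lambda>z. f 0 (return borel 0) z) \<in> borel_measurable \<theta>"
      using D1_meas[OF f_meas return0_P1] by (simp add: measurable_cong_sets[OF theta refl])
    have "(\<integral>\<^sup>+z. G (v, z) \<partial>?T) = (\<integral>\<^sup>+z. ennreal (norm (f (v j) (emp N v) z - f 0 (return borel 0) z) powr p) \<partial>\<theta>)"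
      using elaw by (simp add: G_def \<delta>0_def \<epsilon>_def)
    also have "\<dots> \<le> ennreal \<sigma> * ennreal ((norm (v j) + (\<Sum>k\<in>{1..N}. norm (v k)) / N) powr p)"
      by (rule Dlip_bound[OF emp_P1[OF N] W1_emp_le[OF N] _ p1 m1 m2]) (use sig in \<open>auto simp: p_def sum_nonneg\<close>)
    finally show "(\<integral>\<^sup>+z. G (v, z) \<partial>?T) \<le> ennreal \<sigma> * ennreal ((norm (v j) + (\<Sum>k\<in>{1..N}. norm (v k)) / N) powr p)" .
  qed
  also have "\<dots> = (\<integral>\<^sup>+w. ennreal \<sigma> * ennreal ((norm (X j w) + (\<Sum>k\<in>{1..N}. norm (X k w)) / N) powr p) \<partial>M)"
  proof -
    have mm: "(\<lambda>v::nat \<Rightarrow> real^'d. ennreal \<sigma> * ennreal ((norm (v j) + (\<Sum>k\<in>{1..N}. norm (v k)) / N) powr p))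
        \<in> borel_measurable (PiM {1..N} (\<lambda>_. borel))"
      using j by measurable
    have "(\<integral>\<^sup>+v. ennreal \<sigma> * ennreal ((norm (v j) + (\<Sum>k\<in>{1..N}. norm (v k)) / N) powr p) \<partial>?S)
       = (\<integral>\<^sup>+w. ennreal \<sigma> * ennreal ((norm (V w j) + (\<Sum>k\<in>{1..N}. norm (V w k)) / N) powr p) \<partial>M)"
      by (rule nn_integral_distr[OF Vm]) (use mm in simp)
    also have "\<dots> = (\<integral>\<^sup>+w. ennreal \<sigma> * ennreal ((norm (X j w) + (\<Sum>k\<in>{1..N}. norm (X k w)) / N) powr p) \<partial>M)"
    proof (rule nn_integral_cong)
      fix w
      have "(\<Sum>k\<in>{1..N}. norm (V w k)) = (\<Sum>k\<in>{1..N}. norm (X k w))"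
        by (intro sum.cong) (auto simp: V_def)
      moreover have "V w j = X j w" using j by (simp add: V_def)
      ultimately show "ennreal \<sigma> * ennreal ((norm (V w j) + (\<Sum>k\<in>{1..N}. norm (V w k)) / N) powr p)
          = ennreal \<sigma> * ennreal ((norm (X j w) + (\<Sum>k\<in>{1..N}. norm (X k w)) / N) powr p)" by simp
    qed
    finally show ?thesis .
  qed
  also have "\<dots> \<le> (\<integral>\<^sup>+w. ennreal (\<sigma> * 2 powr \<alpha>) * (ennreal (norm (X j w) powr p) + (\<Sum>k\<in>{1..N}. ennreal (norm (X k w) powr p)) / of_nat N) \<partial>M)"
  proof (rule nn_integral_mono)
    fix w
    define a where "a = norm (X j w)"
    define b where "b = (\<Sum>k\<in>{1..N}. norm (X k w)) / N"
    have ab: "a \<ge> 0" "b \<ge> 0" by (auto simp: a_def b_def sum_nonneg)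
    have "b powr p = (\<Sum>k\<in>{1..N}. (1 / N) * norm (X k w)) powr p"
      by (simp add: b_def sum_divide_distrib)
    also have "\<dots> \<le> (\<Sum>k\<in>{1..N}. (1 / N) * norm (X k w) powr p)"
      using N by (intro jensen_powr[OF p1]) auto
    also have "\<dots> = (\<Sum>k\<in>{1..N}. norm (X k w) powr p) / N"
      by (simp add: sum_divide_distrib)
    finally have bp: "b powr p \<le> (\<Sum>k\<in>{1..N}. norm (X k w) powr p) / N" .
    have "(a + b) powr p \<le> 2 powr (p - 1) * (a powr p + b powr p)" by (rule two_powr[OF p1 ab])
    also have "\<dots> \<le> 2 powr \<alpha> * (a powr p + (\<Sum>k\<in>{1..N}. norm (X k w) powr p) / N)"
      using bp by (simp add: p_def)
    finally have "(a + b) powr p \<le> 2 powr \<alpha> * (a powr p + (\<Sum>k\<in>{1..N}. norm (X k w) powr p) / N)" .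
    then have "ennreal \<sigma> * ennreal ((a + b) powr p) \<le> ennreal \<sigma> * ennreal (2 powr \<alpha> * (a powr p + (\<Sum>k\<in>{1..N}. norm (X k w) powr p) / N))"
      by (intro mult_left_mono ennreal_leI) auto
    also have "\<dots> = ennreal (\<sigma> * 2 powr \<alpha>) * (ennreal (a powr p) + (\<Sum>k\<in>{1..N}. ennreal (norm (X k w) powr p)) / of_nat N)"
    proof -
      have "ennreal ((\<Sum>k\<in>{1..N}. norm (X k w) powr p) / N) = (\<Sum>k\<in>{1..N}. ennreal (norm (X k w) powr p)) / of_nat N"
        using N by (simp add: sum_ennreal ennreal_of_nat_eq_real_of_nat divide_ennreal[symmetric] sum_nonneg)
      moreover have "ennreal (a powr p) + ennreal ((\<Sum>k\<in>{1..N}. norm (X k w) powr p) / N)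
          = ennreal (a powr p + (\<Sum>k\<in>{1..N}. norm (X k w) powr p) / N)"
        by (rule ennreal_plus[symmetric]) (auto simp: sum_nonneg)
      moreover have "ennreal (\<sigma> * 2 powr \<alpha>) * ennreal (a powr p + (\<Sum>k\<in>{1..N}. norm (X k w) powr p) / N)
          = ennreal (\<sigma> * 2 powr \<alpha> * (a powr p + (\<Sum>k\<in>{1..N}. norm (X k w) powr p) / N))"
        by (rule ennreal_mult[symmetric]) (use sig(2) in \<open>auto simp: sum_nonneg\<close>)
      moreover have "ennreal \<sigma> * ennreal (2 powr \<alpha> * (a powr p + (\<Sum>k\<in>{1..N}. norm (X k w) powr p) / N))
          = ennreal (\<sigma> * (2 powr \<alpha> * (a powr p + (\<Sum>k\<in>{1..N}. norm (X k w) powr p) / N)))"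
        by (rule ennreal_mult[symmetric]) (use sig(2) in \<open>auto simp: sum_nonneg\<close>)
      ultimately show ?thesis by (simp only: mult.assoc)
    qed
    finally show "ennreal \<sigma> * ennreal ((norm (X j w) + (\<Sum>k\<in>{1..N}. norm (X k w)) / N) powr p)
        \<le> ennreal (\<sigma> * 2 powr \<alpha>) * (ennreal (norm (X j w) powr p) + (\<Sum>k\<in>{1..N}. ennreal (norm (X k w) powr p)) / of_nat N)"
      by (simp add: a_def b_def)
  qed
  also have "\<dots> = ennreal (\<sigma> * 2 powr \<alpha>) * (IX j + (\<Sum>k\<in>{1..N}. IX k) / of_nat N)"
  proof -
    have ms: "(\<lambda>w. ennreal (norm (X k w) powr p)) \<in> borel_measurable M" if "k \<in> {1..N}" for k
      using Xm'[OF that] by measurable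
    have "(\<integral>\<^sup>+w. (\<Sum>k\<in>{1..N}. ennreal (norm (X k w) powr p)) / of_nat N \<partial>M) = (\<Sum>k\<in>{1..N}. IX k) / of_nat N"
    proof -
      have sm: "(\<lambda>w. \<Sum>k\<in>{1..N}. ennreal (norm (X k w) powr p)) \<in> borel_measurable M"
        by (rule borel_measurable_sum) (rule ms)
      have "(\<integral>\<^sup>+w. (\<Sum>k\<in>{1..N}. ennreal (norm (X k w) powr p)) / of_nat N \<partial>M)
          = (\<integral>\<^sup>+w. (\<Sum>k\<in>{1..N}. ennreal (norm (X k w) powr p)) \<partial>M) / of_nat N"
        by (rule nn_integral_divide[OF sm])
      also have "(\<integral>\<^sup>+w. (\<Sum>k\<in>{1..N}. ennreal (norm (X k w) powr p)) \<partial>M) = (\<Sum>k\<in>{1..N}. IX k)"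
        unfolding IX_def by (rule nn_integral_sum) (rule ms)
      finally show ?thesis .
    qed
    moreover have "(\<lambda>w. (\<Sum>k\<in>{1..N}. ennreal (norm (X k w) powr p)) / of_nat N) \<in> borel_measurable M"
      by (rule borel_measurable_divide_ennreal[OF borel_measurable_sum measurable_const]) (rule ms, simp, simp)
    ultimately show ?thesis using ms[OF j]
      by (simp add: nn_integral_cmult nn_integral_add IX_def)
  qed
  finally have Dbound: "(\<integral>\<^sup>+w. ennreal (\<Delta> w powr p) \<partial>M) \<le> ennreal (\<sigma> * 2 powr \<alpha>) * (IX j + (\<Sum>k\<in>{1..N}. IX k) / of_nat N)" .
  have "(\<integral>\<^sup>+w. ennreal (norm (particle A \<delta> f X0 eps N (Suc n) j w) powr p) \<partial>M)
      \<le> ennreal c1 * IX j + ennreal c2 * (ennreal (\<sigma> * 2 powr \<alpha>) * (IX j + (\<Sum>k\<in>{1..N}. IX k) / of_nat N)) + ennreal c3 * ennreal \<kappa>"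
  proof -
    have "ennreal c2 * (\<integral>\<^sup>+w. ennreal (\<Delta> w powr p) \<partial>M) \<le> ennreal c2 * (ennreal (\<sigma> * 2 powr \<alpha>) * (IX j + (\<Sum>k\<in>{1..N}. IX k) / of_nat N))"
      using Dbound by (rule mult_left_mono) simp
    then have "ennreal c1 * IX j + ennreal c2 * (\<integral>\<^sup>+w. ennreal (\<Delta> w powr p) \<partial>M) + ennreal c3 * (\<integral>\<^sup>+w. ennreal (d1 w powr p) \<partial>M)
        \<le> ennreal c1 * IX j + ennreal c2 * (ennreal (\<sigma> * 2 powr \<alpha>) * (IX j + (\<Sum>k\<in>{1..N}. IX k) / of_nat N)) + ennreal c3 * ennreal \<kappa>"
      unfolding Dint by (intro add_mono order_refl)
    then show ?thesis using int1 by (rule order_trans[rotated])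
  qed
  also have "\<dots> = ennreal c1 * IX j + ennreal (c2 * (\<sigma> * 2 powr \<alpha>)) * (IX j + (\<Sum>k\<in>{1..N}. IX k) / of_nat N) + ennreal (c3 * \<kappa>)"
    using c sig(2) kap(2) by (simp add: ennreal_mult mult.assoc)
  finally show ?thesis unfolding IX_def X_def c1_def c2_def c3_def p_def .
qed

lemma rho_lt1:
  fixes \<alpha> \<omega> \<sigma> \<delta> :: real
  assumes "\<alpha> > 0" "\<sigma> > 0" "\<delta> > 0"
    and ds: "\<delta> powr (1 + \<alpha>) < (4 powr (- \<alpha>) - exp (- (1 + \<alpha>) * \<omega>)) / (2 * \<sigma>)"
  shows "(1/4) powr (-\<alpha>) * exp (-\<omega>) powr (1+\<alpha>) + (1/2) powr (-\<alpha>) * \<delta> powr (1+\<alpha>) * (\<sigma> * 2 powr \<alpha>) * 2 < 1"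
proof -
  have e: "exp (-\<omega>) powr (1+\<alpha>) = exp (- (1 + \<alpha>) * \<omega>)" by (simp add: powr_def algebra_simps)
  have a: "(1/4::real) powr (-\<alpha>) = 4 powr \<alpha>" by (simp add: powr_minus powr_divide)
  have b0: "(1/2::real) powr (-\<alpha>) = 2 powr \<alpha>" by (simp add: powr_minus powr_divide)
  have b1: "(2::real) powr \<alpha> * 2 powr \<alpha> = 4 powr \<alpha>" by (simp add: powr_mult[symmetric])
  have b': "(1/2) powr (-\<alpha>) * \<delta> powr (1+\<alpha>) * (\<sigma> * 2 powr \<alpha>) * 2 = 4 powr \<alpha> * (2 * \<sigma> * \<delta> powr (1+\<alpha>))"
    using b0 b1 by (simp add: algebra_simps)
  have c: "4 powr \<alpha> * 4 powr (-\<alpha>) = (1::real)" by (simp add: powr_add[symmetric])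
  have q: "(4::real) powr \<alpha> > 0" by simp
  have "2 * \<sigma> * \<delta> powr (1+\<alpha>) < 4 powr (- \<alpha>) - exp (- (1 + \<alpha>) * \<omega>)"
    using ds assms by (simp add: pos_less_divide_eq mult.commute)
  then have "exp (- (1 + \<alpha>) * \<omega>) + 2 * \<sigma> * \<delta> powr (1+\<alpha>) < 4 powr (- \<alpha>)" by simp
  then have "4 powr \<alpha> * (exp (- (1 + \<alpha>) * \<omega>) + 2 * \<sigma> * \<delta> powr (1+\<alpha>)) < 4 powr \<alpha> * 4 powr (- \<alpha>)"
    using q by (rule mult_strict_left_mono)
  moreover have eq: "(1/4) powr (-\<alpha>) * exp (-\<omega>) powr (1+\<alpha>) + (1/2) powr (-\<alpha>) * \<delta> powr (1+\<alpha>) * (\<sigma> * 2 powr \<alpha>) * 2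
      = 4 powr \<alpha> * (exp (- (1 + \<alpha>) * \<omega>) + 2 * \<sigma> * \<delta> powr (1+\<alpha>))"
    unfolding a e b' by (simp only: distrib_left)
  ultimately show ?thesis using c by simp
qed

theorem lemma4p4:
  fixes M :: "'w measure"
    and A :: "real^'d::finite^'d"
    and \<omega> \<alpha> \<delta> :: real
    and \<theta> :: "(real^'m::finite) measure"
    and \<mu>0 :: "(real^'d) measure"
    and f :: "real^'d \<Rightarrow> (real^'d) measure \<Rightarrow> real^'m \<Rightarrow> real^'d"
    and X0 :: "nat \<Rightarrow> nat \<Rightarrow> 'w \<Rightarrow> real^'d"
    and eps :: "nat \<Rightarrow> nat \<Rightarrow> 'w \<Rightarrow> real^'m"
  assumes M: "prob_space M"
    and theta: "prob_space \<theta>" "sets \<theta> = sets borel"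
    and mu0: "\<mu>0 \<in> P1"
    and f_meas: "(\<lambda>(x, \<mu>, z). f x \<mu> z) \<in>
        borel_measurable (borel \<Otimes>\<^sub>M (restrict_space (subprob_algebra borel) P1 \<Otimes>\<^sub>M borel))"
    and X0_meas: "\<And>N i. N \<ge> 1 \<Longrightarrow> i \<in> {1..N} \<Longrightarrow> X0 N i \<in> borel_measurable M"
    and X0_law: "\<And>N i. N \<ge> 1 \<Longrightarrow> i \<in> {1..N} \<Longrightarrow> distr M borel (X0 N i) = \<mu>0"
    and X0_exch: "\<And>N p. N \<ge> 1 \<Longrightarrow> p permutes {1..N} \<Longrightarrow>
        distr M (PiM {1..N} (\<lambda>_. borel)) (\<lambda>w. \<lambda>i\<in>{1..N}. X0 N (p i) w)
      = distr M (PiM {1..N} (\<lambda>_. borel)) (\<lambda>w. \<lambda>i\<in>{1..N}. X0 N i w)"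
    and eps_meas: "\<And>i n. i \<ge> 1 \<Longrightarrow> n \<ge> 1 \<Longrightarrow> eps i n \<in> borel_measurable M"
    and eps_law: "\<And>i n. i \<ge> 1 \<Longrightarrow> n \<ge> 1 \<Longrightarrow> distr M borel (eps i n) = \<theta>"
    and eps_indep: "prob_space.indep_vars M (\<lambda>_. borel) (\<lambda>(i, n). eps i n) ({1..} \<times> {1..})"
    and indep_init: "\<And>N. N \<ge> 1 \<Longrightarrow> prob_space.indep_set M
        (sets (vimage_algebra (space M) (\<lambda>w. \<lambda>i\<in>{1..N}. X0 N i w) (PiM {1..N} (\<lambda>_. borel))))
        (sets (vimage_algebra (space M) (\<lambda>w. \<lambda>(i, n)\<in>{1..} \<times> {1..}. eps i n w)
                 (PiM ({1..} \<times> {1..}) (\<lambda>_. borel))))"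
    and A3: "\<omega> > 0" "onorm (\<lambda>x. A *v x) \<le> exp (- \<omega>)"
    and alpha: "\<alpha> > 0"
    and A4_mu0: "(\<integral>\<^sup>+x. ennreal (norm x powr (1 + \<alpha>)) \<partial>\<mu>0) < \<infinity>"
    and A4_D: "(\<integral>\<^sup>+z. ennpow (Dlip f z) (1 + \<alpha>) \<partial>\<theta>) < \<infinity>"
    and A4_D1: "(\<integral>\<^sup>+z. ennreal (D1 f z powr (1 + \<alpha>)) \<partial>\<theta>) < \<infinity>"
    and delta: "\<delta> > 0"
    and delta_small: "let \<sigma>1 = enn2real (\<integral>\<^sup>+z. ennpow (Dlip f z) (1 + \<alpha>) \<partial>\<theta>) in
        \<sigma>1 = 0 \<or> \<delta> powr (1 + \<alpha>) < (4 powr (- \<alpha>) - exp (- (1 + \<alpha>) * \<omega>)) / (2 * \<sigma>1)"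
  shows "(SUP N\<in>{1..}. SUP n\<in>{1..}.
           \<integral>\<^sup>+w. ennreal (norm (particle A \<delta> f X0 eps N n 1 w) powr (1 + \<alpha>)) \<partial>M) < \<infinity>"
proof -
  interpret prob_space M by (rule M)
  define \<sigma> where "\<sigma> = enn2real (\<integral>\<^sup>+z. ennpow (Dlip f z) (1 + \<alpha>) \<partial>\<theta>)"
  have sig: "(\<integral>\<^sup>+z. ennpow (Dlip f z) (1 + \<alpha>) \<partial>\<theta>) = ennreal \<sigma>" unfolding \<sigma>_def using A4_D by simp
  have sig0: "\<sigma> \<ge> 0" by (simp add: \<sigma>_def)
  define \<kappa> where "\<kappa> = enn2real (\<integral>\<^sup>+z. ennreal (D1 f z powr (1 + \<alpha>)) \<partial>\<theta>)"
  have kap: "(\<integral>\<^sup>+z. ennreal (D1 f z powr (1 + \<alpha>)) \<partial>\<theta>) = ennreal \<kappa>" unfolding \<kappa>_def using A4_D1 by simp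
  have kap0: "\<kappa> \<ge> 0" by (simp add: \<kappa>_def)
  define m0 where "m0 = enn2real (\<integral>\<^sup>+x. ennreal (norm x powr (1 + \<alpha>)) \<partial>\<mu>0)"
  have m0: "(\<integral>\<^sup>+x. ennreal (norm x powr (1 + \<alpha>)) \<partial>\<mu>0) = ennreal m0" unfolding m0_def using A4_mu0 by simp
  have m00: "m0 \<ge> 0" by (simp add: m0_def)
  obtain l1 l2 l3 where l: "l1 > 0" "l2 > 0" "l3 > 0" "l1 + l2 + l3 = 1"
    and rho: "l1 powr (-\<alpha>) * exp (-\<omega>) powr (1+\<alpha>) + l2 powr (-\<alpha>) * \<delta> powr (1+\<alpha>) * (\<sigma> * 2 powr \<alpha>) * 2 < 1"
  proof (cases "\<sigma> = 0")
    case True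
    have e1: "exp (-\<omega>) < 1" using A3(1) by simp
    have "exp (-\<omega>) powr (-\<alpha>) * exp (-\<omega>) powr (1+\<alpha>) = exp (-\<omega>)"
      by (simp add: powr_add[symmetric])
    then have "exp (-\<omega>) powr (-\<alpha>) * exp (-\<omega>) powr (1+\<alpha>) + ((1 - exp (-\<omega>)) / 2) powr (-\<alpha>) * \<delta> powr (1+\<alpha>) * (\<sigma> * 2 powr \<alpha>) * 2 < 1"
      using True e1 by simp
    moreover have "exp (-\<omega>) > 0" "(1 - exp (-\<omega>)) / 2 > 0" "exp (-\<omega>) + (1 - exp (-\<omega>)) / 2 + (1 - exp (-\<omega>)) / 2 = 1"
      using e1 by auto
    ultimately show ?thesis using that by blast
  next
    case False
    then have s: "\<sigma> > 0" using sig0 by simp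
    have ds: "\<delta> powr (1 + \<alpha>) < (4 powr (- \<alpha>) - exp (- (1 + \<alpha>) * \<omega>)) / (2 * \<sigma>)"
      using delta_small False unfolding \<sigma>_def[symmetric] Let_def by simp
    have "(1/4) powr (-\<alpha>) * exp (-\<omega>) powr (1+\<alpha>) + (1/2) powr (-\<alpha>) * \<delta> powr (1+\<alpha>) * (\<sigma> * 2 powr \<alpha>) * 2 < 1"
      by (rule rho_lt1[OF alpha s delta ds])
    then show ?thesis using that[of "1/4" "1/2" "1/4"] by simp
  qed
  define c1 where "c1 = l1 powr (-\<alpha>) * exp (-\<omega>) powr (1+\<alpha>)"
  define c2 where "c2 = l2 powr (-\<alpha>) * \<delta> powr (1+\<alpha>) * (\<sigma> * 2 powr \<alpha>)"
  define Cc where "Cc = l3 powr (-\<alpha>) * \<delta> powr (1+\<alpha>) * \<kappa>"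
  have c: "c1 \<ge> 0" "c2 \<ge> 0" "Cc \<ge> 0" using sig0 kap0 by (auto simp: c1_def c2_def Cc_def)
  have rho': "c1 + c2 * 2 < 1" using rho by (simp add: c1_def c2_def)
  define K where "K = max m0 (Cc / (1 - (c1 + c2 * 2)))"
  have K: "m0 \<le> K" "Cc \<le> (1 - (c1 + c2 * 2)) * K" "K \<ge> 0"
  proof -
    show "m0 \<le> K" by (simp add: K_def)
    have "Cc / (1 - (c1 + c2 * 2)) \<le> K" by (simp add: K_def)
    then show "Cc \<le> (1 - (c1 + c2 * 2)) * K" using rho' by (simp add: pos_divide_le_eq mult.commute)
    show "K \<ge> 0" using m00 by (simp add: K_def)
  qed
  have main: "\<forall>j\<in>{1..N}. (\<integral>\<^sup>+w. ennreal (norm (particle A \<delta> f X0 eps N n j w) powr (1 + \<alpha>)) \<partial>M) \<le> ennreal K"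
    if N: "N \<ge> 1" for N n
  proof (induction n)
    case 0
    show ?case
    proof
      fix j assume j: "j \<in> {1..N}"
      have "(\<integral>\<^sup>+w. ennreal (norm (X0 N j w) powr (1 + \<alpha>)) \<partial>M)
          = (\<integral>\<^sup>+x. ennreal (norm x powr (1 + \<alpha>)) \<partial>distr M borel (X0 N j))"
        by (rule nn_integral_distr[OF X0_meas[OF N j], symmetric]) simp
      also have "\<dots> = ennreal m0" using X0_law[OF N j] m0 by simp
      finally show "(\<integral>\<^sup>+w. ennreal (norm (particle A \<delta> f X0 eps N 0 j w) powr (1 + \<alpha>)) \<partial>M) \<le> ennreal K"
        using K by simp
    qed
  next
    case (Suc n)
    show ?case
    proof
      fix j assume j: "j \<in> {1..N}"
      have j1: "j \<ge> 1" using j by simp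
      have ind: "distr M (PiM {1..N} (\<lambda>_. borel)) (\<lambda>w. \<lambda>k\<in>{1..N}. particle A \<delta> f X0 eps N n k w)
           \<Otimes>\<^sub>M distr M (borel :: (real^'m) measure) (eps j (Suc n))
         = distr M (PiM {1..N} (\<lambda>_. borel) \<Otimes>\<^sub>M borel)
             (\<lambda>w. (\<lambda>k\<in>{1..N}. particle A \<delta> f X0 eps N n k w, eps j (Suc n) w))"
        by (rule step_indep[where N=N and ?X0.0=X0 and eps=eps and f=f and A=A and \<delta>=\<delta> and i=j and n=n,
              OF N f_meas X0_meas[OF N] eps_meas eps_indep indep_init[OF N] j1])
      have Xm: "particle A \<delta> f X0 eps N n k \<in> borel_measurable M" if "k \<in> {1..N}" for k
        by (rule particle_meas[where M'=M and n=n and m=n and ?X0.0=X0 and eps=eps and f=f and N=N and A=A and \<delta>=\<delta>, OF N f_meas])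
          (use that X0_meas[OF N] eps_meas in auto)
      have em: "eps j (Suc n) \<in> borel_measurable M" using eps_meas j1 by simp
      have elaw: "distr M borel (eps j (Suc n)) = \<theta>" using eps_law j1 by simp
      define I where "I k = (\<integral>\<^sup>+w. ennreal (norm (particle A \<delta> f X0 eps N n k w) powr (1 + \<alpha>)) \<partial>M)" for k
      have IK: "I k \<le> ennreal K" if "k \<in> {1..N}" for k using Suc.IH that by (simp add: I_def)
      have sb: "(\<integral>\<^sup>+w. ennreal (norm (particle A \<delta> f X0 eps N (Suc n) j w) powr (1 + \<alpha>)) \<partial>M)
          \<le> ennreal c1 * I j + ennreal c2 * (I j + (\<Sum>k\<in>{1..N}. I k) / of_nat N) + ennreal Cc"
        unfolding I_def c1_def c2_def Cc_def
        by (rule step_bound[OF N j alpha delta f_meas theta(2) A3(2) Xm em elaw ind sig sig0 kap kap0 l])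
      have "(\<Sum>k\<in>{1..N}. I k) / of_nat N \<le> (\<Sum>k\<in>{1..N}. ennreal K) / of_nat N"
        by (rule divide_right_mono_ennreal, rule sum_mono) (rule IK)
      also have "(\<Sum>k\<in>{1..N}. ennreal K) / of_nat N = ennreal K"
      proof -
        have "(\<Sum>k\<in>{1..N}. ennreal K) = ennreal (real N * K)" using K(3) by (simp add: ennreal_mult ennreal_of_nat_eq_real_of_nat)
        then show ?thesis using N K(3) by (simp add: ennreal_of_nat_eq_real_of_nat divide_ennreal)
      qed
      finally have avg: "(\<Sum>k\<in>{1..N}. I k) / of_nat N \<le> ennreal K" .
      have "ennreal c1 * I j + ennreal c2 * (I j + (\<Sum>k\<in>{1..N}. I k) / of_nat N) + ennreal Cc
          \<le> ennreal c1 * ennreal K + ennreal c2 * (ennreal K + ennreal K) + ennreal Cc"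
        using IK[OF j] avg by (intro add_mono mult_left_mono order_refl) auto
      also have "\<dots> = ennreal (c1 * K + c2 * (K + K) + Cc)"
      proof -
        have e1: "ennreal (c1 * K) = ennreal c1 * ennreal K" by (rule ennreal_mult) (use c K(3) in auto)
        have e2a: "ennreal (c2 * (K + K)) = ennreal c2 * ennreal (K + K)" by (rule ennreal_mult) (use c K(3) in auto)
        have e2b: "ennreal (K + K) = ennreal K + ennreal K" by (rule ennreal_plus) (use K(3) in auto)
        have e3a: "ennreal (c1 * K + c2 * (K + K) + Cc) = ennreal (c1 * K + c2 * (K + K)) + ennreal Cc"
          by (rule ennreal_plus) (use c K(3) in auto)
        have e3b: "ennreal (c1 * K + c2 * (K + K)) = ennreal (c1 * K) + ennreal (c2 * (K + K))"
          by (rule ennreal_plus) (use c K(3) in auto)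
        show ?thesis by (simp only: e3a e3b e1 e2a e2b)
      qed
      also have "\<dots> \<le> ennreal K"
        using K(2) by (intro ennreal_leI) (simp add: algebra_simps)
      finally show "(\<integral>\<^sup>+w. ennreal (norm (particle A \<delta> f X0 eps N (Suc n) j w) powr (1 + \<alpha>)) \<partial>M) \<le> ennreal K"
        using sb by (rule order_trans[rotated])
    qed
  qed
  have "(SUP N\<in>{1..}. SUP n\<in>{1..}.
           \<integral>\<^sup>+w. ennreal (norm (particle A \<delta> f X0 eps N n 1 w) powr (1 + \<alpha>)) \<partial>M) \<le> ennreal K"
  proof (intro SUP_least)
    fix N n :: nat assume "N \<in> {1..}"
    then have N: "N \<ge> 1" by simp
    then have "1 \<in> {1..N}" by simp
    then show "(\<integral>\<^sup>+w. ennreal (norm (particle A \<delta> f X0 eps N n 1 w) powr (1 + \<alpha>)) \<partial>M) \<le> ennreal K"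
      using main[OF N] by blast
  qed
  then show ?thesis by (rule le_less_trans) simp
qed

end
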